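(* In the blowup/base-change setting below, fix $p\in\{0,\dots,P-1\}$ and suppose that there are no special fibers at $B^{p,p+1}$, i.e. $\Delta'$ contains a monomial not divisible by $e_p$ nor by $e_{p+1}$. Then for every positive integer $k$: (1) $\bar n_{kp+r}=(k-r)\,n_p+r\,n_{p+1}$ for $r=0,1,\dots,k$; (2) there are no special fibers at $\bar B^{\bar p,\bar p+1}$ for any $\bar p=kp,\dots,k(p+1)-1$.
   Context: Blowup setting. Let $f=f(s,t;u)$, $g=g(s,t;u)$ be complex polynomials, homogeneous in $(s,t)$ of degrees $8$ and $12$, defining a family of Weierstrass models $y^2=x^3+fxz^4+gz^6$ over $\mathbb P^1_{[s:t]}$ with parameter $u$; $\Delta:=4f^3+27g^2$. Let $a,b$ be the vanishing orders in $s$ at $s=0$ of $f,g$ for generic $u\ne0$ (not both $a\ge4$, $b\ge6$), and write $f=s^a\sum_i\mathcal F_i\,s^it^{8-a-i}$, $g=s^b\sum_j\mathcal G_j\,s^jt^{12-b-j}$. Assume the 3-fold vanishing orders of $(f,g,\Delta)$ at $(u,s)=(0,0)$ (largest $N$ with the function in $(u,s)^N$, $t=1$) are $(4+\alpha,6+\beta,12+\gamma)$ with $\alpha=0$ or $\beta=0$, and that this persists under all base changes $u\mapsto u^\ell$ (Classes 1–4). Blowup chain: $e_0:=u$; the $p$-th blowup substitutes $e_{p-1}\mapsto e_{p-1}e_p$, $s\mapsto se_p$ and divides $f,g,\Delta$ by $e_p^4,e_p^6,e_p^{12}$; $\mu_{q,i}$, $\nu_{q,j}$ are the vanishing orders in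 $e_q$ of the coefficients $\mathcal F_i(e_0,\dots)$, $\mathcal G_j(e_0,\dots)$; $P$ is the first number of blowups for which some $i<4-a$ with $\mathcal F_i\neq0$ has $\mu_{P,i}<4-a-i$ or some $j<6-b$ with $\mathcal G_j\ne0$ has $\nu_{P,j}<6-b-j$. Standing assumption: there is such an $i$ with $\mu_{P,i}=0$ or such a $j$ with $\nu_{P,j}=0$ (achievable by a preliminary base change). Base components $B^p=\{e_p=0\}$ form a chain, $B^{p,p+1}=\{e_p=e_{p+1}=0\}$. $n_p$ is the largest power of $e_p$ dividing $\Delta$ and $\Delta=\prod_qe_q^{n_q}\Delta'$. There is a special fiber at $B^{p,p+1}$ iff $\Delta'$ vanishes there, i.e. every monomial of $\Delta'$ is divisible by $e_p$ or $e_{p+1}$. Base change: for a positive integer $k$, the barred configuration $\bar{\mathcal Y}$ is obtained by substituting $u\mapsto u^k$ in $f,g$ and then performing the blowup chain, which now consists of $\bar P=kP$ blowups with coordinates $\bar e_0,\dots,\bar e_{\bar P}$; $\bar B^{\bar p}$, $\bar B^{\bar p,\bar p+1}$, $\bar n_{\bar p}$, $\bar\Delta'$ are defined analogously. *)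

theory Defs
  imports Complex_Main "HOL-Library.Poly_Mapping" "HOL-Library.Extended_Nat"
begin

text \<open>Polynomials in the variables s, t, e_0 (= u), e_1, e_2, ...\<close>

type_synonym mono = "nat \<Rightarrow>\<^sub>0 nat"
type_synonym mpoly = "mono \<Rightarrow>\<^sub>0 complex"

definition sv :: nat where "sv = 0"
definition tv :: nat where "tv = 1"
definition ev :: "nat \<Rightarrow> nat" where "ev q = q + 2"

definition relabel :: "(mono \<Rightarrow> mono) \<Rightarrow> mpoly \<Rightarrow> mpoly" where
  "relabel \<phi> F = (\<Sum>m\<in>Poly_Mapping.keys F. Poly_Mapping.single (\<phi> m) (Poly_Mapping.lookup F m))"

definition disc :: "mpoly \<Rightarrow> mpoly \<Rightarrow> mpoly" where
  "disc f g = 4 * f ^ 3 + 27 * g ^ 2"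

text \<open>Base change u \<mapsto> u^k (u = e_0).\<close>
definition bc :: "nat \<Rightarrow> mpoly \<Rightarrow> mpoly" where
  "bc k F = relabel (\<lambda>m. m + Poly_Mapping.single (ev 0) ((k - 1) * Poly_Mapping.lookup m (ev 0))) F"

text \<open>p-th blowup (p \<ge> 1): substitute e_{p-1} \<mapsto> e_{p-1} e_p, s \<mapsto> s e_p ...\<close>
definition subst_blow :: "nat \<Rightarrow> mpoly \<Rightarrow> mpoly" where
  "subst_blow p F = relabel
     (\<lambda>m. m + Poly_Mapping.single (ev p) (Poly_Mapping.lookup m (ev (p - 1)) + Poly_Mapping.lookup m sv)) F"

text \<open>... and divide by (variable v)^w (exact in the setting considered).\<close>
definition div_var :: "nat \<Rightarrow> nat \<Rightarrow> mpoly \<Rightarrow> mpoly" where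
  "div_var v w F = relabel (\<lambda>m. m - Poly_Mapping.single v w) F"

text \<open>Blowup chain of p blowups, dividing by e_q^w at the q-th blowup
  (w = 4, 6, 12 for f, g, Delta).\<close>
fun blow_chain :: "nat \<Rightarrow> nat \<Rightarrow> mpoly \<Rightarrow> mpoly" where
  "blow_chain w 0 F = F"
| "blow_chain w (Suc p) F = div_var (ev (Suc p)) w (subst_blow (Suc p) (blow_chain w p F))"

text \<open>Vanishing order in the variable v (minimal exponent of v; for F \<noteq> 0).\<close>
definition vord :: "nat \<Rightarrow> mpoly \<Rightarrow> nat" where
  "vord v F = Min ((\<lambda>m. Poly_Mapping.lookup m v) ` Poly_Mapping.keys F)"

definition ord_s :: "mpoly \<Rightarrow> enat" where
  "ord_s F = (if F = 0 then \<infinity> else enat (vord sv F))"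

text \<open>3-fold vanishing order at (u,s) = (0,0) (with t = 1): largest N with
  F in (u,s)^N, i.e. minimal total degree in u and s; infinite for F = 0.\<close>
definition ord_us :: "mpoly \<Rightarrow> enat" where
  "ord_us F = (if F = 0 then \<infinity>
     else enat (Min ((\<lambda>m. Poly_Mapping.lookup m sv + Poly_Mapping.lookup m (ev 0)) ` Poly_Mapping.keys F)))"

definition st_coeff :: "nat \<Rightarrow> nat \<Rightarrow> mpoly \<Rightarrow> mpoly" where
  "st_coeff j l F = (\<Sum>m\<in>{m\<in>Poly_Mapping.keys F. Poly_Mapping.lookup m sv = j \<and> Poly_Mapping.lookup m tv = l}.
      Poly_Mapping.single (m - Poly_Mapping.single sv j - Poly_Mapping.single tv l) (Poly_Mapping.lookup F m))"

definition class_cond :: "mpoly \<Rightarrow> mpoly \<Rightarrow> bool" where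
  "class_cond f g \<longleftrightarrow> (\<exists>\<alpha> \<beta> \<gamma> :: enat.
      ord_us f = 4 + \<alpha> \<and> ord_us g = 6 + \<beta> \<and> ord_us (disc f g) = 12 + \<gamma> \<and>
      (\<alpha> = 0 \<or> \<beta> = 0))"

text \<open>The condition defining P, after q blowups.  Here j = a + i (resp. b + j
  in the paper), so that 4 - a - i = 4 - j and i < 4 - a iff j < 4.\<close>
definition drop_cond :: "mpoly \<Rightarrow> mpoly \<Rightarrow> nat \<Rightarrow> bool" where
  "drop_cond f g q \<longleftrightarrow>
     (\<exists>j<4. st_coeff j (8 - j) f \<noteq> 0 \<and>
            vord (ev q) (st_coeff j (8 - j) (blow_chain 4 q f)) < 4 - j) \<or>
     (\<exists>j<6. st_coeff j (12 - j) g \<noteq> 0 \<and>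
            vord (ev q) (st_coeff j (12 - j) (blow_chain 6 q g)) < 6 - j)"

definition standing :: "mpoly \<Rightarrow> mpoly \<Rightarrow> nat \<Rightarrow> bool" where
  "standing f g P \<longleftrightarrow>
     (\<exists>j<4. st_coeff j (8 - j) f \<noteq> 0 \<and>
            vord (ev P) (st_coeff j (8 - j) (blow_chain 4 P f)) = 0) \<or>
     (\<exists>j<6. st_coeff j (12 - j) g \<noteq> 0 \<and>
            vord (ev P) (st_coeff j (12 - j) (blow_chain 6 P g)) = 0)"

definition Dfin :: "nat \<Rightarrow> mpoly \<Rightarrow> mpoly \<Rightarrow> mpoly" where
  "Dfin Pn f g = blow_chain 12 Pn (disc f g)"

definition nexp :: "nat \<Rightarrow> mpoly \<Rightarrow> mpoly \<Rightarrow> nat \<Rightarrow> nat" where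
  "nexp Pn f g q = vord (ev q) (Dfin Pn f g)"

definition Dprime :: "nat \<Rightarrow> mpoly \<Rightarrow> mpoly \<Rightarrow> mpoly" where
  "Dprime Pn f g = relabel
     (\<lambda>m. m - (\<Sum>q\<le>Pn. Poly_Mapping.single (ev q) (nexp Pn f g q))) (Dfin Pn f g)"

definition special_fiber :: "nat \<Rightarrow> mpoly \<Rightarrow> mpoly \<Rightarrow> nat \<Rightarrow> bool" where
  "special_fiber Pn f g p \<longleftrightarrow>
     (\<forall>m\<in>Poly_Mapping.keys (Dprime Pn f g). Poly_Mapping.lookup m (ev p) \<noteq> 0 \<or> Poly_Mapping.lookup m (ev (Suc p)) \<noteq> 0)"

definition stu_homog :: "nat \<Rightarrow> mpoly \<Rightarrow> bool" where
  "stu_homog d F \<longleftrightarrow> (\<forall>m\<in>Poly_Mapping.keys F. Poly_Mapping.keys m \<subseteq> {sv, tv, ev 0} \<and> Poly_Mapping.lookup m sv + Poly_Mapping.lookup m tv = d)"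

end

theory Submission
  imports Defs
begin

lemma relabel_superset:
  assumes "finite A" "Poly_Mapping.keys F \<subseteq> A"
  shows "relabel \<phi> F = (\<Sum>m\<in>A. Poly_Mapping.single (\<phi> m) (Poly_Mapping.lookup F m))"
  unfolding relabel_def
  by (rule sum.mono_neutral_left) (use assms in \<open>auto simp: in_keys_iff\<close>)

lemma relabel_zero[simp]: "relabel \<phi> 0 = 0"
  by (simp add: relabel_def)

lemma relabel_add: "relabel \<phi> (F + G) = relabel \<phi> F + relabel \<phi> G"
proof -
  let ?A = "Poly_Mapping.keys F \<union> Poly_Mapping.keys G"
  have "relabel \<phi> (F + G) = (\<Sum>m\<in>?A. Poly_Mapping.single (\<phi> m) (Poly_Mapping.lookup (F+G) m))"
    by (rule relabel_superset) (use keys_add[of F G] in auto)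
  also have "\<dots> = (\<Sum>m\<in>?A. Poly_Mapping.single (\<phi> m) (Poly_Mapping.lookup F m))
     + (\<Sum>m\<in>?A. Poly_Mapping.single (\<phi> m) (Poly_Mapping.lookup G m))"
    by (simp add: lookup_add single_add sum.distrib)
  also have "\<dots> = relabel \<phi> F + relabel \<phi> G"
    by (subst (1 2) relabel_superset[of ?A]) auto
  finally show ?thesis .
qed

lemma relabel_sum: "finite I \<Longrightarrow> relabel \<phi> (\<Sum>i\<in>I. H i) = (\<Sum>i\<in>I. relabel \<phi> (H i))"
  by (induction I rule: finite_induct) (auto simp: relabel_add)

lemma relabel_single: "relabel \<phi> (Poly_Mapping.single k c) = Poly_Mapping.single (\<phi> k) c"
  by (subst relabel_superset[of "{k}"]) auto

lemma relabel_comp: "relabel \<phi>2 (relabel \<phi>1 F) = relabel (\<phi>2 \<circ> \<phi>1) F"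
  unfolding relabel_def[of \<phi>1] relabel_def[of "\<phi>2 \<circ> \<phi>1"]
  by (simp add: relabel_sum relabel_single)

lemma relabel_cong: "(\<And>m. m \<in> Poly_Mapping.keys F \<Longrightarrow> \<phi> m = \<psi> m) \<Longrightarrow> relabel \<phi> F = relabel \<psi> F"
  unfolding relabel_def by (rule sum.cong) auto

lemma expand: "(F::mpoly) = (\<Sum>m\<in>Poly_Mapping.keys F. Poly_Mapping.single m (Poly_Mapping.lookup F m))"
proof (rule poly_mapping_eqI)
  fix k
  show "Poly_Mapping.lookup F k = Poly_Mapping.lookup (\<Sum>m\<in>Poly_Mapping.keys F. Poly_Mapping.single m (Poly_Mapping.lookup F m)) k"
    by (simp add: lookup_sum lookup_single when_def in_keys_iff)
qed

lemma relabel_mult: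
  assumes hom: "\<And>x y. \<psi> (x + y) = \<psi> x + \<psi> y"
  shows "relabel \<psi> (F * G) = relabel \<psi> F * relabel \<psi> (G::mpoly)"
proof -
  have "F * G = (\<Sum>m\<in>Poly_Mapping.keys F. Poly_Mapping.single m (Poly_Mapping.lookup F m))
      * (\<Sum>n\<in>Poly_Mapping.keys G. Poly_Mapping.single n (Poly_Mapping.lookup G n))"
    by (subst (1) expand, subst (2) expand) (rule refl)
  also have "\<dots> = (\<Sum>m\<in>Poly_Mapping.keys F. \<Sum>n\<in>Poly_Mapping.keys G.
      Poly_Mapping.single (m + n) (Poly_Mapping.lookup F m * Poly_Mapping.lookup G n))"
    by (simp add: sum_product mult_single)
  finally have "relabel \<psi> (F * G) = (\<Sum>m\<in>Poly_Mapping.keys F. \<Sum>n\<in>Poly_Mapping.keys G.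
      Poly_Mapping.single (\<psi> m + \<psi> n) (Poly_Mapping.lookup F m * Poly_Mapping.lookup G n))"
    by (simp add: relabel_sum relabel_single hom)
  also have "\<dots> = relabel \<psi> F * relabel \<psi> G"
    unfolding relabel_def by (simp add: sum_product mult_single)
  finally show ?thesis .
qed

lemma relabel_numeral:
  assumes "\<psi> 0 = 0"
  shows "relabel \<psi> (numeral n :: mpoly) = numeral n"
proof -
  have e: "(numeral n :: mpoly) = Poly_Mapping.single 0 (numeral n)" by simp
  show ?thesis by (subst (1 2) e) (simp only: relabel_single assms)
qed

lemma relabel_disc:
  assumes hom: "\<And>x y. \<psi> (x + y) = \<psi> x + \<psi> y" and "\<psi> 0 = 0"
  shows "relabel \<psi> (disc f g) = disc (relabel \<psi> f) (relabel \<psi> g)"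
  unfolding disc_def power3_eq_cube power2_eq_square
  by (simp add: relabel_add relabel_mult[OF hom] relabel_numeral assms(2))

lemma lookup_sum_single:
  assumes "finite A" "inj_on \<phi> A" "x \<in> A"
  shows "Poly_Mapping.lookup (\<Sum>m\<in>A. Poly_Mapping.single (\<phi> m) (h m)) (\<phi> x) = h x"
proof -
  have "Poly_Mapping.lookup (\<Sum>m\<in>A. Poly_Mapping.single (\<phi> m) (h m)) (\<phi> x)
     = (\<Sum>m\<in>A. if m = x then h m else 0)"
    unfolding lookup_sum lookup_single
    by (rule sum.cong) (use assms in \<open>auto simp: when_def inj_on_def\<close>)
  also have "\<dots> = h x" using assms by simp
  finally show ?thesis .
qed

lemma keys_sum_single:
  "Poly_Mapping.keys (\<Sum>m\<in>A. Poly_Mapping.single (\<phi> m) (h m)) \<subseteq> \<phi> ` A"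
  using keys_sum[of "\<lambda>m. Poly_Mapping.single (\<phi> m) (h m)" A] by (auto split: if_splits)

lemma relabel_keys_sub: "Poly_Mapping.keys (relabel \<phi> F) \<subseteq> \<phi> ` Poly_Mapping.keys F"
  unfolding relabel_def by (rule keys_sum_single)

lemma relabel_lookup_inj:
  "inj_on \<phi> (Poly_Mapping.keys F) \<Longrightarrow> x \<in> Poly_Mapping.keys F \<Longrightarrow>
     Poly_Mapping.lookup (relabel \<phi> F) (\<phi> x) = Poly_Mapping.lookup F x"
  unfolding relabel_def by (rule lookup_sum_single) auto

lemma relabel_keys_inj:
  assumes "inj_on \<phi> (Poly_Mapping.keys F)"
  shows "Poly_Mapping.keys (relabel \<phi> F) = \<phi> ` Poly_Mapping.keys F"
proof
  show "\<phi> ` Poly_Mapping.keys F \<subseteq> Poly_Mapping.keys (relabel \<phi> F)"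
    using relabel_lookup_inj[OF assms] by (auto simp: in_keys_iff)
qed (rule relabel_keys_sub)

definition Ew :: "nat \<Rightarrow> nat \<Rightarrow> mono \<Rightarrow> int" where
  "Ew w r m = int (Poly_Mapping.lookup m 2) + int r * (int (Poly_Mapping.lookup m 0) - int w)"

definition Phi :: "nat \<Rightarrow> nat \<Rightarrow> mono \<Rightarrow> mono" where
  "Phi w q m = m + (\<Sum>r\<in>{1..q}. Poly_Mapping.single (r + 2) (nat (Ew w r m)))"

definition good :: "mono \<Rightarrow> bool" where
  "good m \<longleftrightarrow> (\<forall>z\<ge>3. Poly_Mapping.lookup m z = 0)"

lemma Ew_Suc: "Ew w (Suc q) m = Ew w q m + (int (Poly_Mapping.lookup m 0) - int w)"
  by (simp add: Ew_def algebra_simps)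

lemma Ew_0: "Ew w 0 m = int (Poly_Mapping.lookup m 2)"
  by (simp add: Ew_def)

lemma lin:
  fixes c d :: int
  assumes "0 \<le> c" "0 \<le> c + int q * d" "r \<le> q"
  shows "0 \<le> c + int r * d"
proof (cases "d \<ge> 0")
  case True then show ?thesis using assms by simp
next
  case False
  have "int q * d \<le> int r * d" using False assms(3) by (simp add: mult_right_mono_neg)
  then show ?thesis using assms by simp
qed

lemma Ew_lin: "0 \<le> Ew w q m \<Longrightarrow> r \<le> q \<Longrightarrow> 0 \<le> Ew w r m"
  unfolding Ew_def by (rule lin) auto

lemma Phi_Suc: "Phi w (Suc q) m = Phi w q m + Poly_Mapping.single (Suc q + 2) (nat (Ew w (Suc q) m))"
  unfolding Phi_def by (simp add: atLeastAtMostSuc_conv atLeastAtMostSuc_conv add_ac)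

lemma Phi_lookup: "Poly_Mapping.lookup (Phi w q m) z =
   Poly_Mapping.lookup m z + (if 3 \<le> z \<and> z \<le> q + 2 then nat (Ew w (z - 2) m) else 0)"
proof (induction q)
  case 0 then show ?case by (simp add: Phi_def)
next
  case (Suc q)
  show ?case
    unfolding Phi_Suc lookup_add lookup_single Suc.IH
    by (cases "Suc q + 2 = z") (auto simp: when_def)
qed

lemma Phi_at: "good m \<Longrightarrow> Poly_Mapping.lookup (Phi w q m) (q + 2) = nat (Ew w q m)"
proof (cases q)
  case 0 then show ?thesis by (simp add: Phi_def Ew_0 numeral_2_eq_2)
next
  case (Suc q') assume "good m" then show ?thesis using Suc by (simp add: Phi_lookup good_def)
qed

lemma Phi_inj: "inj (Phi w q)"
proof (rule injI)
  fix m m' assume h: "Phi w q m = Phi w q m'"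
  have l0: "Poly_Mapping.lookup m 0 = Poly_Mapping.lookup m' 0"
    using arg_cong[OF h, of "\<lambda>x. Poly_Mapping.lookup x 0"] by (simp add: Phi_lookup)
  have l2: "Poly_Mapping.lookup m 2 = Poly_Mapping.lookup m' 2"
    using arg_cong[OF h, of "\<lambda>x. Poly_Mapping.lookup x 2"] by (simp add: Phi_lookup)
  have E: "Ew w r m = Ew w r m'" for r by (simp add: Ew_def l0 l2)
  show "m = m'"
  proof (rule poly_mapping_eqI)
    fix z show "Poly_Mapping.lookup m z = Poly_Mapping.lookup m' z"
      using arg_cong[OF h, of "\<lambda>x. Poly_Mapping.lookup x z"] unfolding Phi_lookup E by (auto split: if_splits)
  qed
qed

lemma relabel_id: "relabel (\<lambda>m. m) F = (F::mpoly)"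
  unfolding relabel_def by (rule expand[symmetric])

lemma gen_step:
  fixes X :: mono
  assumes "Poly_Mapping.lookup X v = 0" "A - w = B"
  shows "X + Poly_Mapping.single v A - Poly_Mapping.single v w = X + Poly_Mapping.single v B"
proof (rule poly_mapping_eqI)
  fix z show "Poly_Mapping.lookup (X + Poly_Mapping.single v A - Poly_Mapping.single v w) z =
     Poly_Mapping.lookup (X + Poly_Mapping.single v B) z"
    unfolding lookup_add lookup_minus lookup_single
    using assms by (cases "v = z") auto
qed

lemma step_id:
  assumes g: "good m" and e0: "0 \<le> Ew w q m" and e1: "0 \<le> Ew w (Suc q) m"
  shows "Phi w q m + Poly_Mapping.single (Suc q + 2)
      (Poly_Mapping.lookup (Phi w q m) (q + 2) + Poly_Mapping.lookup (Phi w q m) 0)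
     - Poly_Mapping.single (Suc q + 2) w = Phi w (Suc q) m"
proof -
  have a: "Poly_Mapping.lookup (Phi w q m) (q + 2) = nat (Ew w q m)" by (rule Phi_at[OF g])
  have b: "Poly_Mapping.lookup (Phi w q m) 0 = Poly_Mapping.lookup m 0" by (simp add: Phi_lookup)
  have c: "Poly_Mapping.lookup (Phi w q m) (Suc q + 2) = 0" using g by (simp add: Phi_lookup good_def)
  have d: "nat (Ew w q m) + Poly_Mapping.lookup m 0 - w = nat (Ew w (Suc q) m)"
    using e0 e1 Ew_Suc[of w q m] by linarith
  show ?thesis unfolding a b Phi_Suc by (rule gen_step[OF c d])
qed

lemma chain:
  assumes "\<forall>m\<in>Poly_Mapping.keys F. good m \<and> 0 \<le> Ew w q m"
  shows "blow_chain w q F = relabel (Phi w q) F"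
  using assms
proof (induction q)
  case 0
  have "Phi w 0 = (\<lambda>m. m)" by (simp add: Phi_def fun_eq_iff)
  then show ?case by (simp add: relabel_id)
next
  case (Suc q)
  have h: "\<forall>m\<in>Poly_Mapping.keys F. good m \<and> 0 \<le> Ew w q m"
  proof
    fix m assume "m \<in> Poly_Mapping.keys F"
    with Suc.prems have "good m" "0 \<le> Ew w (Suc q) m" by auto
    then show "good m \<and> 0 \<le> Ew w q m" using Ew_lin[of w "Suc q" m q] by simp
  qed
  have IH: "blow_chain w q F = relabel (Phi w q) F" by (rule Suc.IH[OF h])
  have e1: "ev (Suc q) = Suc q + 2" by (simp add: ev_def)
  have e2: "ev (Suc q - 1) = q + 2" by (simp add: ev_def)
  have "blow_chain w (Suc q) F = div_var (ev (Suc q)) w (subst_blow (Suc q) (blow_chain w q F))"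
    by (rule blow_chain.simps)
  also have "\<dots> = relabel (\<lambda>y. y - Poly_Mapping.single (Suc q + 2) w)
     (relabel (\<lambda>x. x + Poly_Mapping.single (Suc q + 2) (Poly_Mapping.lookup x (q + 2) + Poly_Mapping.lookup x 0))
       (relabel (Phi w q) F))"
    unfolding IH div_var_def subst_blow_def e1 e2 sv_def ..
  also have "\<dots> = relabel (Phi w (Suc q)) F"
    unfolding relabel_comp
  proof (rule relabel_cong)
    fix m assume m: "m \<in> Poly_Mapping.keys F"
    have "good m" "0 \<le> Ew w q m" "0 \<le> Ew w (Suc q) m" using Suc.prems h m by auto
    note st = step_id[OF this]
    show "((\<lambda>y. y - Poly_Mapping.single (Suc q + 2) w) \<circ>
         ((\<lambda>x. x + Poly_Mapping.single (Suc q + 2) (Poly_Mapping.lookup x (q + 2) + Poly_Mapping.lookup x 0)) \<circ>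
         Phi w q)) m = Phi w (Suc q) m"
      using st by (simp only: comp_apply)
  qed
  finally show ?case .
qed

definition stmap :: "nat \<Rightarrow> nat \<Rightarrow> mono \<Rightarrow> mono" where
  "stmap j l m = m - Poly_Mapping.single sv j - Poly_Mapping.single tv l"

lemma stmap_lookup: "z \<noteq> 0 \<Longrightarrow> z \<noteq> 1 \<Longrightarrow> Poly_Mapping.lookup (stmap j l m) z = Poly_Mapping.lookup m z"
  by (simp add: stmap_def lookup_minus lookup_single sv_def tv_def when_def)

lemma st_key:
  assumes "x \<in> Poly_Mapping.keys F" "Poly_Mapping.lookup x 0 = j" "Poly_Mapping.lookup x 1 = l"
  shows "Poly_Mapping.lookup (st_coeff j l F) (stmap j l x) = Poly_Mapping.lookup F x"
proof -
  let ?M = "{m\<in>Poly_Mapping.keys F. Poly_Mapping.lookup m sv = j \<and> Poly_Mapping.lookup m tv = l}"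
  have inj: "inj_on (stmap j l) ?M"
  proof (rule inj_onI)
    fix m m' assume m: "m \<in> ?M" and m': "m' \<in> ?M" and e: "stmap j l m = stmap j l m'"
    show "m = m'"
    proof (rule poly_mapping_eqI)
      fix z
      show "Poly_Mapping.lookup m z = Poly_Mapping.lookup m' z"
      proof (cases "z = 0 \<or> z = 1")
        case True then show ?thesis using m m' by (auto simp: sv_def tv_def)
      next
        case False then show ?thesis
          using arg_cong[OF e, of "\<lambda>x. Poly_Mapping.lookup x z"] by (simp add: stmap_lookup)
      qed
    qed
  qed
  have "x \<in> ?M" using assms by (simp add: sv_def tv_def)
  then show ?thesis unfolding st_coeff_def stmap_def[symmetric]
    by (intro lookup_sum_single inj) auto
qed

lemma vord_le: "m \<in> Poly_Mapping.keys F \<Longrightarrow> vord v F \<le> Poly_Mapping.lookup m v"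
  unfolding vord_def by (rule Min_le) auto

lemma homog_good: "stu_homog d F \<Longrightarrow> m \<in> Poly_Mapping.keys F \<Longrightarrow> good m"
  unfolding good_def
proof (intro allI impI)
  fix z :: nat assume H: "stu_homog d F" "m \<in> Poly_Mapping.keys F" and z: "3 \<le> z"
  have "Poly_Mapping.keys m \<subseteq> {sv, tv, ev 0}" using H unfolding stu_homog_def by auto
  then have "Poly_Mapping.keys m \<subseteq> {0,1,Suc (Suc 0)}" by (simp add: sv_def tv_def ev_def)
  then have "z \<notin> Poly_Mapping.keys m" using z by auto
  then show "Poly_Mapping.lookup m z = 0" by (simp add: in_keys_iff)
qed

lemma homog_t: "stu_homog d F \<Longrightarrow> m \<in> Poly_Mapping.keys F \<Longrightarrow> Poly_Mapping.lookup m 1 = d - Poly_Mapping.lookup m 0"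
  unfolding stu_homog_def by (auto simp: sv_def tv_def)

lemma Fexact:
  assumes hom: "stu_homog d F"
  and nd: "\<forall>q<P. \<not>(\<exists>j<w. st_coeff j (d - j) F \<noteq> 0 \<and> vord (ev q) (st_coeff j (d - j) (blow_chain w q F)) < w - j)"
  shows "\<forall>m\<in>Poly_Mapping.keys F. 0 \<le> Ew w P m"
proof -
  have "\<forall>m\<in>Poly_Mapping.keys F. 0 \<le> Ew w q m" if "q \<le> P" for q
    using that
  proof (induction q)
    case 0 then show ?case by (simp add: Ew_0)
  next
    case (Suc q)
    have IH: "\<forall>m\<in>Poly_Mapping.keys F. 0 \<le> Ew w q m" using Suc by simp
    have ch: "blow_chain w q F = relabel (Phi w q) F"
      by (rule chain) (use IH homog_good[OF hom] in blast)
    show ?case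
    proof
      fix m assume m: "m \<in> Poly_Mapping.keys F"
      define a where "a = Poly_Mapping.lookup m 0"
      have Eq: "0 \<le> Ew w q m" using IH m by blast
      show "0 \<le> Ew w (Suc q) m"
      proof (cases "w \<le> a")
        case True then show ?thesis using Eq Ew_Suc[of w q m] a_def by simp
      next
        case False
        have g: "good m" by (rule homog_good[OF hom m])
        have t: "Poly_Mapping.lookup m 1 = d - a" using homog_t[OF hom m] a_def by simp
        have k1: "Phi w q m \<in> Poly_Mapping.keys (blow_chain w q F)"
          unfolding ch using Phi_inj relabel_keys_inj m by (metis image_eqI inj_on_subset subset_UNIV)
        have p0: "Poly_Mapping.lookup (Phi w q m) 0 = a" by (simp add: Phi_lookup a_def)
        have p1: "Poly_Mapping.lookup (Phi w q m) 1 = d - a" using t by (simp add: Phi_lookup)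
        have k2: "stmap a (d - a) (Phi w q m) \<in> Poly_Mapping.keys (st_coeff a (d - a) (blow_chain w q F))"
          using st_key[OF k1 p0 p1] k1 by (simp add: in_keys_iff)
        have k3: "stmap a (d - a) m \<in> Poly_Mapping.keys (st_coeff a (d - a) F)"
          using st_key[OF m a_def[symmetric] t] m by (simp add: in_keys_iff)
        then have nz: "st_coeff a (d - a) F \<noteq> 0" by auto
        have lv: "Poly_Mapping.lookup (stmap a (d - a) (Phi w q m)) (ev q) = nat (Ew w q m)"
          using Phi_at[OF g, of w q] by (simp add: stmap_lookup ev_def)
        have "vord (ev q) (st_coeff a (d - a) (blow_chain w q F)) \<le> Poly_Mapping.lookup (stmap a (d - a) (Phi w q m)) (ev q)"
          by (rule vord_le[OF k2])
        also note lv
        finally have "vord (ev q) (st_coeff a (d - a) (blow_chain w q F)) \<le> nat (Ew w q m)" .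
        moreover have "\<not> vord (ev q) (st_coeff a (d - a) (blow_chain w q F)) < w - a"
        proof -
          have qP: "q < P" using Suc.prems by simp
          have nn: "\<not>(\<exists>j<w. st_coeff j (d - j) F \<noteq> 0 \<and> vord (ev q) (st_coeff j (d - j) (blow_chain w q F)) < w - j)"
            using nd qP by blast
          have "a < w" using False by simp
          then show ?thesis using nn nz by blast
        qed
        ultimately have "w - a \<le> nat (Ew w q m)" by simp
        then show ?thesis using Eq Ew_Suc[of w q m] a_def False by linarith
      qed
    qed
  qed
  then show ?thesis by simp
qed

definition bcmap :: "nat \<Rightarrow> mono \<Rightarrow> mono" where
  "bcmap k m = m + Poly_Mapping.single (ev 0) ((k - 1) * Poly_Mapping.lookup m (ev 0))"

lemma bc_eq: "bc k F = relabel (bcmap k) F"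
  unfolding bc_def bcmap_def by (rule refl)

lemma bcmap_add: "bcmap k (x + y) = bcmap k x + bcmap k y"
  by (simp add: bcmap_def lookup_add distrib_left single_add add_ac)

lemma bcmap_0: "bcmap k 0 = 0"
  by (simp add: bcmap_def)

lemma bcmap_lookup: "k > 0 \<Longrightarrow> Poly_Mapping.lookup (bcmap k m) z =
   (if z = 2 then k * Poly_Mapping.lookup m 2 else Poly_Mapping.lookup m z)"
  by (cases k) (auto simp: bcmap_def lookup_add lookup_single ev_def when_def numeral_2_eq_2)

lemma bcmap_inj: "k > 0 \<Longrightarrow> inj (bcmap k)"
proof (rule injI)
  fix x y assume k: "k > 0" and e: "bcmap k x = bcmap k y"
  show "x = y"
  proof (rule poly_mapping_eqI)
    fix z
    show "Poly_Mapping.lookup x z = Poly_Mapping.lookup y z"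
      using arg_cong[OF e, of "\<lambda>m. Poly_Mapping.lookup m z"] k
      by (simp add: bcmap_lookup split: if_splits)
  qed
qed

lemma bcmap_good: "k > 0 \<Longrightarrow> good m \<Longrightarrow> good (bcmap k m)"
  by (simp add: good_def bcmap_lookup)

lemma bcmap_Ew: "k > 0 \<Longrightarrow> Ew w r (bcmap k m) =
    int k * int (Poly_Mapping.lookup m 2) + int r * (int (Poly_Mapping.lookup m 0) - int w)"
  by (simp add: Ew_def bcmap_lookup)

lemma Phi_ev: "good m \<Longrightarrow> r \<le> q \<Longrightarrow> Poly_Mapping.lookup (Phi w q m) (ev r) = nat (Ew w r m)"
  by (cases r) (auto simp: Phi_lookup ev_def good_def Ew_0 numeral_2_eq_2)

lemma vord_relabel: "inj_on \<phi> (Poly_Mapping.keys F) \<Longrightarrow>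
   vord v (relabel \<phi> F) = Min ((\<lambda>m. Poly_Mapping.lookup (\<phi> m) v) ` Poly_Mapping.keys F)"
  unfolding vord_def by (simp add: relabel_keys_inj image_image)

lemma lookupN: "Poly_Mapping.lookup (\<Sum>q\<le>n. Poly_Mapping.single (ev q) (h q)) z =
    (if 2 \<le> z \<and> z - 2 \<le> n then h (z - 2) else 0)"
  by (induction n) (auto simp: lookup_add lookup_single ev_def when_def)

lemma keys_four: "Poly_Mapping.keys (numeral n :: mpoly) \<subseteq> {0}"
proof -
  have "(numeral n :: mpoly) = Poly_Mapping.single 0 (numeral n)" by simp
  then show ?thesis by (metis keys_single empty_subsetI subset_refl)
qed

lemma keys_c_mult:
  assumes c: "Poly_Mapping.keys (c :: mpoly) \<subseteq> {0}"
  shows "Poly_Mapping.keys (c * F) \<subseteq> Poly_Mapping.keys F"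
proof
  fix x assume "x \<in> Poly_Mapping.keys (c * F)"
  then have "x \<in> {a + b | a b. a \<in> Poly_Mapping.keys c \<and> b \<in> Poly_Mapping.keys F}"
    using keys_mult[of c F] by (rule subsetD[rotated])
  then obtain a b where "a \<in> Poly_Mapping.keys c" "b \<in> Poly_Mapping.keys F" "x = a + b" by blast
  with c show "x \<in> Poly_Mapping.keys F" by auto
qed

lemma keys_numeral_mult: "Poly_Mapping.keys ((numeral n :: mpoly) * F) \<subseteq> Poly_Mapping.keys F"
  by (rule keys_c_mult[OF keys_four])

lemma keys_disc:
  assumes "m \<in> Poly_Mapping.keys (disc f g)"
  shows "(\<exists>m1 m2 m3. m1 \<in> Poly_Mapping.keys f \<and> m2 \<in> Poly_Mapping.keys f \<and> m3 \<in> Poly_Mapping.keys f \<and> m = m1 + m2 + m3)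
    \<or> (\<exists>n1 n2. n1 \<in> Poly_Mapping.keys g \<and> n2 \<in> Poly_Mapping.keys g \<and> m = n1 + n2)"
proof -
  have "m \<in> Poly_Mapping.keys (4 * f^3) \<union> Poly_Mapping.keys (27 * g^2)"
    using assms keys_add[of "4 * f^3" "27 * g^2"] unfolding disc_def by (rule subsetD[rotated])
  then show ?thesis
  proof
    assume "m \<in> Poly_Mapping.keys (4 * f^3)"
    then have "m \<in> Poly_Mapping.keys (f * f * f)"
      using keys_numeral_mult[of _ "f^3"] unfolding power3_eq_cube by (rule subsetD[rotated])
    then have "m \<in> {a + b | a b. a \<in> Poly_Mapping.keys (f * f) \<and> b \<in> Poly_Mapping.keys f}"
      using keys_mult[of "f * f" f] by (rule subsetD[rotated])
    then obtain a b where ab: "a \<in> Poly_Mapping.keys (f * f)" "b \<in> Poly_Mapping.keys f" "m = a + b"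
      by blast
    from ab(1) have "a \<in> {a + b | a b. a \<in> Poly_Mapping.keys f \<and> b \<in> Poly_Mapping.keys f}"
      using keys_mult[of f f] by (rule subsetD[rotated])
    then obtain c d where "c \<in> Poly_Mapping.keys f" "d \<in> Poly_Mapping.keys f" "a = c + d"
      by blast
    with ab show ?thesis by blast
  next
    assume "m \<in> Poly_Mapping.keys (27 * g^2)"
    then have "m \<in> Poly_Mapping.keys (g * g)"
      using keys_numeral_mult[of _ "g^2"] unfolding power2_eq_square by (rule subsetD[rotated])
    then have "m \<in> {a + b | a b. a \<in> Poly_Mapping.keys g \<and> b \<in> Poly_Mapping.keys g}"
      using keys_mult[of g g] by (rule subsetD[rotated])
    then show ?thesis by blast
  qed
qed

lemma good_add: "good x \<Longrightarrow> good y \<Longrightarrow> good (x + y)"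
  by (simp add: good_def lookup_add)

lemma Ew_add: "Ew (w1 + w2) r (x + y) = Ew w1 r x + Ew w2 r y"
  by (simp add: Ew_def lookup_add algebra_simps)

lemma inj_minus:
  assumes "\<forall>y\<in>K. \<forall>z. Poly_Mapping.lookup N z \<le> Poly_Mapping.lookup y z"
  shows "inj_on (\<lambda>y. y - N) (K :: mono set)"
proof (rule inj_onI)
  fix x y assume x: "x \<in> K" and y: "y \<in> K" and e: "x - N = y - N"
  show "x = y"
  proof (rule poly_mapping_eqI)
    fix z
    have "Poly_Mapping.lookup x z - Poly_Mapping.lookup N z = Poly_Mapping.lookup y z - Poly_Mapping.lookup N z"
      using arg_cong[OF e, of "\<lambda>m. Poly_Mapping.lookup m z"] by (simp add: lookup_minus)
    moreover have "Poly_Mapping.lookup N z \<le> Poly_Mapping.lookup x z" "Poly_Mapping.lookup N z \<le> Poly_Mapping.lookup y z"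
      using assms x y by auto
    ultimately show "Poly_Mapping.lookup x z = Poly_Mapping.lookup y z" by linarith
  qed
qed

lemma ev_inv: "2 \<le> z \<Longrightarrow> ev (z - 2) = z" by (simp add: ev_def)

theorem lemma1:
  fixes f g :: mpoly and P p :: nat and a b :: enat
  assumes hf: "stu_homog 8 f" and hg: "stu_homog 12 g"
    and ha: "a = ord_s f" and hb: "b = ord_s g"
    and hab: "\<not> (a \<ge> 4 \<and> b \<ge> 6)"
    and hD: "disc f g \<noteq> 0"
    and hcls: "\<forall>l::nat. l \<ge> 1 \<longrightarrow> class_cond (bc l f) (bc l g)"
    and hP: "drop_cond f g P" and hPmin: "\<forall>q<P. \<not> drop_cond f g q"
    and hst: "standing f g P"
    and hp: "p < P"
    and hnsf: "\<not> special_fiber P f g p"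
  shows "\<forall>k::nat. k > 0 \<longrightarrow>
     (\<forall>r\<le>k. nexp (k * P) (bc k f) (bc k g) (k * p + r)
              = (k - r) * nexp P f g p + r * nexp P f g (Suc p)) \<and>
     (\<forall>pb. k * p \<le> pb \<and> pb < k * (Suc p) \<longrightarrow> \<not> special_fiber (k * P) (bc k f) (bc k g) pb)"
proof (intro allI impI)
  fix k :: nat assume k: "k > 0"
  define D where "D = disc f g"
  define S where "S = Poly_Mapping.keys D"
  have finS: "finite S" by (simp add: S_def)
  have nd_f: "\<forall>q<P. \<not>(\<exists>j<4. st_coeff j (8 - j) f \<noteq> 0 \<and> vord (ev q) (st_coeff j (8 - j) (blow_chain 4 q f)) < 4 - j)"
    using hPmin unfolding drop_cond_def by blast
  have nd_g: "\<forall>q<P. \<not>(\<exists>j<6. st_coeff j (12 - j) g \<noteq> 0 \<and> vord (ev q) (st_coeff j (12 - j) (blow_chain 6 q g)) < 6 - j)"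
    using hPmin unfolding drop_cond_def by blast
  have ef: "\<forall>m\<in>Poly_Mapping.keys f. 0 \<le> Ew 4 P m" by (rule Fexact[OF hf nd_f])
  have eg: "\<forall>m\<in>Poly_Mapping.keys g. 0 \<le> Ew 6 P m" by (rule Fexact[OF hg nd_g])
  have SD: "\<forall>m\<in>S. good m \<and> 0 \<le> Ew 12 P m"
  proof
    fix m assume "m \<in> S"
    then have "m \<in> Poly_Mapping.keys (disc f g)" by (simp add: S_def D_def)
    from keys_disc[OF this] show "good m \<and> 0 \<le> Ew 12 P m"
    proof
      assume "\<exists>m1 m2 m3. m1 \<in> Poly_Mapping.keys f \<and> m2 \<in> Poly_Mapping.keys f \<and> m3 \<in> Poly_Mapping.keys f \<and> m = m1 + m2 + m3"
      then obtain m1 m2 m3 where h: "m1 \<in> Poly_Mapping.keys f" "m2 \<in> Poly_Mapping.keys f" "m3 \<in> Poly_Mapping.keys f" "m = m1 + m2 + m3"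
        by blast
      have "good m" unfolding h(4) by (intro good_add homog_good[OF hf] h(1-3))
      moreover have "Ew 12 P m = Ew 4 P m1 + Ew 4 P m2 + Ew 4 P m3"
        unfolding h(4) by (simp add: Ew_def lookup_add algebra_simps)
      moreover have "0 \<le> Ew 4 P m1" "0 \<le> Ew 4 P m2" "0 \<le> Ew 4 P m3" using ef h by auto
      ultimately show ?thesis by simp
    next
      assume "\<exists>n1 n2. n1 \<in> Poly_Mapping.keys g \<and> n2 \<in> Poly_Mapping.keys g \<and> m = n1 + n2"
      then obtain n1 n2 where h: "n1 \<in> Poly_Mapping.keys g" "n2 \<in> Poly_Mapping.keys g" "m = n1 + n2"
        by blast
      have "good m" unfolding h(3) by (intro good_add homog_good[OF hg] h(1-2))
      moreover have "Ew 12 P m = Ew 6 P n1 + Ew 6 P n2"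
        unfolding h(3) by (simp add: Ew_def lookup_add algebra_simps)
      moreover have "0 \<le> Ew 6 P n1" "0 \<le> Ew 6 P n2" using eg h by auto
      ultimately show ?thesis by simp
    qed
  qed
  have Dfin_eq: "Dfin P f g = relabel (Phi 12 P) D"
    unfolding Dfin_def D_def[symmetric] by (rule chain) (use SD S_def in auto)
  have injP: "inj_on (Phi 12 P) S" using Phi_inj by (metis inj_on_subset subset_UNIV)
  have keysDfin: "Poly_Mapping.keys (Dfin P f g) = Phi 12 P ` S"
    unfolding Dfin_eq S_def by (rule relabel_keys_inj) (use injP S_def in simp)
  define X where "X q m = nat (Ew 12 q m)" for q m
  have nexpP: "nexp P f g q = Min (X q ` S)" if "q \<le> P" for q
  proof -
    have "nexp P f g q = Min ((\<lambda>m. Poly_Mapping.lookup (Phi 12 P m) (ev q)) ` S)"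
      unfolding nexp_def Dfin_eq S_def by (rule vord_relabel) (use injP S_def in simp)
    also have "(\<lambda>m. Poly_Mapping.lookup (Phi 12 P m) (ev q)) ` S = X q ` S"
      by (rule image_cong) (use SD Phi_ev that in \<open>auto simp: X_def\<close>)
    finally show ?thesis .
  qed
  obtain x where x: "x \<in> Poly_Mapping.keys (Dprime P f g)" "Poly_Mapping.lookup x (ev p) = 0"
      "Poly_Mapping.lookup x (ev (Suc p)) = 0"
    using hnsf unfolding special_fiber_def by blast
  define N where "N = (\<Sum>q\<le>P. Poly_Mapping.single (ev q) (nexp P f g q))"
  have "x \<in> (\<lambda>y. y - N) ` Poly_Mapping.keys (Dfin P f g)"
    using relabel_keys_sub x(1) unfolding Dprime_def N_def by blast
  then obtain m0 where m0: "m0 \<in> S" "x = Phi 12 P m0 - N" using keysDfin by auto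
  have lx: "Poly_Mapping.lookup x (ev r) = X r m0 - nexp P f g r" if "r \<le> P" for r
    using that SD m0 unfolding m0(2) N_def
    by (simp add: lookup_minus Phi_ev X_def lookupN) (simp add: ev_def)
  have minr: "nexp P f g r = X r m0 \<and> (\<forall>m\<in>S. X r m0 \<le> X r m)"
    if "r \<le> P" "Poly_Mapping.lookup x (ev r) = 0" for r
  proof -
    have le: "\<forall>m\<in>S. Min (X r ` S) \<le> X r m" using finS by auto
    have "X r m0 \<le> Min (X r ` S)" using lx[OF that(1)] that(2) nexpP[OF that(1)] by simp
    moreover have "Min (X r ` S) \<le> X r m0" using le m0(1) by blast
    ultimately have eq: "Min (X r ` S) = X r m0" by (rule antisym[rotated])
    show ?thesis using eq le nexpP[OF that(1)] by simp
  qed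
  have min0: "nexp P f g p = X p m0" "\<forall>m\<in>S. X p m0 \<le> X p m"
    using minr[of p] hp x(2) by auto
  have min1: "nexp P f g (Suc p) = X (Suc p) m0" "\<forall>m\<in>S. X (Suc p) m0 \<le> X (Suc p) m"
    using minr[of "Suc p"] hp x(3) by auto
  define \<psi> where "\<psi> = bcmap k"
  have Dbar: "disc (bc k f) (bc k g) = relabel \<psi> D"
    unfolding bc_eq D_def \<psi>_def by (rule relabel_disc[symmetric]) (simp_all add: bcmap_add bcmap_0)
  have injpsi: "inj_on \<psi> S" using bcmap_inj[OF k] unfolding \<psi>_def by (metis inj_on_subset subset_UNIV)
  have keysDb: "Poly_Mapping.keys (relabel \<psi> D) = \<psi> ` S"
    unfolding S_def by (rule relabel_keys_inj) (use injpsi S_def in simp)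
  have psiEw: "Ew 12 (k * P) (\<psi> m) = int k * Ew 12 P m" for m
    unfolding \<psi>_def bcmap_Ew[OF k] by (simp add: Ew_def algebra_simps)
  have SDb: "\<forall>m\<in>Poly_Mapping.keys (relabel \<psi> D). good m \<and> 0 \<le> Ew 12 (k * P) m"
    unfolding keysDb using SD bcmap_good[OF k] psiEw by (auto simp: \<psi>_def)
  have Dfinb: "Dfin (k * P) (bc k f) (bc k g) = relabel (Phi 12 (k * P)) (relabel \<psi> D)"
    unfolding Dfin_def Dbar by (rule chain[OF SDb])
  have injPb: "inj_on (Phi 12 (k * P)) (Poly_Mapping.keys (relabel \<psi> D))"
    using Phi_inj by (metis inj_on_subset subset_UNIV)
  have keysDfinb: "Poly_Mapping.keys (Dfin (k * P) (bc k f) (bc k g)) = Phi 12 (k * P) ` \<psi> ` S"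
    unfolding Dfinb keysDb[symmetric] by (rule relabel_keys_inj[OF injPb])
  define Y where "Y q m = nat (Ew 12 q (\<psi> m))" for q m
  have nexpb: "nexp (k * P) (bc k f) (bc k g) q = Min (Y q ` S)" if "q \<le> k * P" for q
  proof -
    have "nexp (k * P) (bc k f) (bc k g) q
        = Min ((\<lambda>m. Poly_Mapping.lookup (Phi 12 (k * P) m) (ev q)) ` Poly_Mapping.keys (relabel \<psi> D))"
      unfolding nexp_def Dfinb by (rule vord_relabel[OF injPb])
    also have "\<dots> = Min ((\<lambda>m. Poly_Mapping.lookup (Phi 12 (k * P) (\<psi> m)) (ev q)) ` S)"
      unfolding keysDb image_image ..
    also have "(\<lambda>m. Poly_Mapping.lookup (Phi 12 (k * P) (\<psi> m)) (ev q)) ` S = Y q ` S"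
    proof (rule image_cong)
      fix m assume "m \<in> S"
      then have "good (\<psi> m)" using SD bcmap_good[OF k] by (simp add: \<psi>_def)
      then show "Poly_Mapping.lookup (Phi 12 (k * P) (\<psi> m)) (ev q) = Y q m"
        using Phi_ev that by (simp add: Y_def)
    qed simp
    finally show ?thesis .
  qed
  have keyY: "Y (k * p + r) m = (k - r) * X p m + r * X (Suc p) m" if "r \<le> k" "m \<in> S" for r m
  proof -
    have E0: "0 \<le> Ew 12 P m" using SD that by auto
    have E1: "0 \<le> Ew 12 p m" "0 \<le> Ew 12 (Suc p) m" using Ew_lin[OF E0] hp by auto
    have "Ew 12 (k * p + r) (\<psi> m) = int (k - r) * Ew 12 p m + int r * Ew 12 (Suc p) m"
      unfolding \<psi>_def bcmap_Ew[OF k] using that(1) by (simp add: Ew_def of_nat_diff algebra_simps)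
    then show ?thesis using E1 unfolding Y_def X_def by (simp add: nat_add_distrib nat_mult_distrib)
  qed
  have bound: "k * p + r \<le> k * P" if "r \<le> k" for r
  proof -
    have "k * Suc p \<le> k * P" using hp by (intro mult_le_mono2) simp
    then show ?thesis using that by (simp add: algebra_simps)
  qed
  have cl1: "nexp (k * P) (bc k f) (bc k g) (k * p + r) = (k - r) * nexp P f g p + r * nexp P f g (Suc p)
      \<and> Y (k * p + r) m0 = (k - r) * nexp P f g p + r * nexp P f g (Suc p)" if "r \<le> k" for r
  proof -
    have "Min (Y (k * p + r) ` S) = Y (k * p + r) m0"
    proof (rule Min_eqI)
      show "finite (Y (k * p + r) ` S)" using finS by simp
      show "Y (k * p + r) m0 \<in> Y (k * p + r) ` S" using m0 by simp
      fix y assume "y \<in> Y (k * p + r) ` S"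
      then obtain m where m: "m \<in> S" "y = Y (k * p + r) m" by auto
      show "Y (k * p + r) m0 \<le> y"
        unfolding m(2) keyY[OF that m(1)] keyY[OF that m0(1)]
        using min0(2) min1(2) m(1) by (intro add_mono mult_le_mono2) auto
    qed
    then show ?thesis using nexpb[OF bound[OF that]] keyY[OF that m0(1)] min0(1) min1(1) by simp
  qed
  show "(\<forall>r\<le>k. nexp (k * P) (bc k f) (bc k g) (k * p + r)
              = (k - r) * nexp P f g p + r * nexp P f g (Suc p)) \<and>
     (\<forall>pb. k * p \<le> pb \<and> pb < k * (Suc p) \<longrightarrow> \<not> special_fiber (k * P) (bc k f) (bc k g) pb)"
  proof (intro conjI allI impI)
    fix r assume "r \<le> k" then show "nexp (k * P) (bc k f) (bc k g) (k * p + r)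
              = (k - r) * nexp P f g p + r * nexp P f g (Suc p)" using cl1 by blast
  next
    fix pb assume pb: "k * p \<le> pb \<and> pb < k * Suc p"
    define r where "r = pb - k * p"
    have r: "r < k" "pb = k * p + r" using pb by (auto simp: r_def)
    define Nb where "Nb = (\<Sum>q\<le>k * P. Poly_Mapping.single (ev q) (nexp (k * P) (bc k f) (bc k g) q))"
    define y0 where "y0 = Phi 12 (k * P) (\<psi> m0)"
    have y0k: "y0 \<in> Poly_Mapping.keys (Dfin (k * P) (bc k f) (bc k g))"
      unfolding keysDfinb y0_def using m0 by simp
    have injN: "inj_on (\<lambda>y. y - Nb) (Poly_Mapping.keys (Dfin (k * P) (bc k f) (bc k g)))"
    proof (rule inj_minus, intro ballI allI)
      fix y z assume y: "y \<in> Poly_Mapping.keys (Dfin (k * P) (bc k f) (bc k g))"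
      show "Poly_Mapping.lookup Nb z \<le> Poly_Mapping.lookup y z"
      proof (cases "2 \<le> z \<and> z - 2 \<le> k * P")
        case True
        have "Poly_Mapping.lookup Nb z = nexp (k * P) (bc k f) (bc k g) (z - 2)"
          unfolding Nb_def lookupN using True by simp
        also have "\<dots> \<le> Poly_Mapping.lookup y (ev (z - 2))"
          unfolding nexp_def by (rule vord_le[OF y])
        finally show ?thesis using ev_inv True by simp
      next
        case False then show ?thesis unfolding Nb_def lookupN using False by auto
      qed
    qed
    define xb where "xb = y0 - Nb"
    have xbk: "xb \<in> Poly_Mapping.keys (Dprime (k * P) (bc k f) (bc k g))"
    proof -
      have "Poly_Mapping.lookup (Dprime (k * P) (bc k f) (bc k g)) xb
          = Poly_Mapping.lookup (Dfin (k * P) (bc k f) (bc k g)) y0"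
        unfolding Dprime_def xb_def Nb_def[symmetric] by (rule relabel_lookup_inj[OF injN y0k])
      then show ?thesis using y0k by (simp add: in_keys_iff)
    qed
    have gm0: "good (\<psi> m0)" using SD m0 bcmap_good[OF k] by (simp add: \<psi>_def)
    have lxb: "Poly_Mapping.lookup xb (ev (k * p + s)) = 0" if "s \<le> k" for s
    proof -
      have q: "k * p + s \<le> k * P" by (rule bound[OF that])
      have "Poly_Mapping.lookup y0 (ev (k * p + s)) = Y (k * p + s) m0"
        unfolding y0_def Y_def by (rule Phi_ev[OF gm0 q])
      moreover have "Poly_Mapping.lookup Nb (ev (k * p + s)) = nexp (k * P) (bc k f) (bc k g) (k * p + s)"
        unfolding Nb_def lookupN using q by (simp add: ev_def)
      ultimately show ?thesis using cl1[OF that] unfolding xb_def by (simp add: lookup_minus)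
    qed
    have "Poly_Mapping.lookup xb (ev pb) = 0" using lxb[of r] r by simp
    moreover have "Poly_Mapping.lookup xb (ev (Suc pb)) = 0" using lxb[of "Suc r"] r by simp
    ultimately show "\<not> special_fiber (k * P) (bc k f) (bc k g) pb"
      unfolding special_fiber_def using xbk by blast
  qed
qed

end
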